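(* Let $S$ be a multiplicatively closed subset of an $r$-lattice $L$ (with $1\in S$, $0\notin S$). Then $L$ is an $S$-Noetherian lattice if and only if every $S$-prime element of $L$ is $S$-compact.
   Context: A multiplicative lattice is a complete lattice $L$ with a commutative, associative multiplication $\cdot$ distributing over arbitrary joins, with $1$ as identity. Compact elements are defined as usual ($c\le\bigvee a_\alpha$ implies $c$ below a finite subjoin); $L_*$ denotes the set of compact elements. $(a:b)=\bigvee\{x\mid xb\le a\}$. An element $m$ is principal if it is meet principal ($a\wedge mb=m((a:m)\wedge b)$ for all $a,b$) and join principal ($a\vee(b:m)=(am\vee b):m$ for all $a,b$). An $r$-lattice is a modular, principally generated, compactly generated multiplicative lattice with $1$ compact. A multiplicatively closed subset is a nonempty $S\subseteq L_*$ closed under multiplication. An element $a$ is $S$-compact if there exist a compact $b$ and $s\in S$ with $s a\le b\le a$; $L$ is $S$-Noetherian if every element is $S$-compact. A proper element $p$ with $t\not\le p$ for all $t\in S$ is $S$-prime if there exists $s\in S$ such that for all $a,b\in L$, $a\cdot b\le p$ implies $s\cdot a\le p$ or $s\cdot b\le p$. *)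

theory Defs
  imports Main
begin

definition mult_lattice :: "('a::complete_lattice \<Rightarrow> 'a \<Rightarrow> 'a) \<Rightarrow> bool" where
  "mult_lattice m \<longleftrightarrow>
     (\<forall>a b. m a b = m b a) \<and>
     (\<forall>a b c. m (m a b) c = m a (m b c)) \<and>
     (\<forall>a A. m a (Sup A) = Sup ((\<lambda>x. m a x) ` A)) \<and>
     (\<forall>a. m top a = a)"

definition compact_el :: "'a::complete_lattice \<Rightarrow> bool" where
  "compact_el c \<longleftrightarrow> (\<forall>A. c \<le> Sup A \<longrightarrow> (\<exists>F. F \<subseteq> A \<and> finite F \<and> c \<le> Sup F))"

definition residual :: "('a::complete_lattice \<Rightarrow> 'a \<Rightarrow> 'a) \<Rightarrow> 'a \<Rightarrow> 'a \<Rightarrow> 'a" where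
  "residual m a b = Sup {x. m x b \<le> a}"

definition meet_principal :: "('a::complete_lattice \<Rightarrow> 'a \<Rightarrow> 'a) \<Rightarrow> 'a \<Rightarrow> bool" where
  "meet_principal m e \<longleftrightarrow> (\<forall>a b. inf a (m e b) = m e (inf (residual m a e) b))"

definition join_principal :: "('a::complete_lattice \<Rightarrow> 'a \<Rightarrow> 'a) \<Rightarrow> 'a \<Rightarrow> bool" where
  "join_principal m e \<longleftrightarrow> (\<forall>a b. sup a (residual m b e) = residual m (sup (m a e) b) e)"

definition principal_el :: "('a::complete_lattice \<Rightarrow> 'a \<Rightarrow> 'a) \<Rightarrow> 'a \<Rightarrow> bool" where
  "principal_el m e \<longleftrightarrow> meet_principal m e \<and> join_principal m e"

definition r_lattice :: "('a::complete_lattice \<Rightarrow> 'a \<Rightarrow> 'a) \<Rightarrow> bool" where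
  "r_lattice m \<longleftrightarrow> mult_lattice m \<and>
     (\<forall>a b c::'a. a \<le> c \<longrightarrow> sup a (inf b c) = inf (sup a b) c) \<and>
     (\<forall>a::'a. \<exists>P. (\<forall>x\<in>P. principal_el m x) \<and> a = Sup P) \<and>
     (\<forall>a::'a. \<exists>C. (\<forall>x\<in>C. compact_el x) \<and> a = Sup C) \<and>
     compact_el (top::'a)"

definition mult_closed :: "('a::complete_lattice \<Rightarrow> 'a \<Rightarrow> 'a) \<Rightarrow> 'a set \<Rightarrow> bool" where
  "mult_closed m S \<longleftrightarrow> S \<noteq> {} \<and> (\<forall>s\<in>S. compact_el s) \<and> (\<forall>s\<in>S. \<forall>t\<in>S. m s t \<in> S)"

definition S_compact :: "('a::complete_lattice \<Rightarrow> 'a \<Rightarrow> 'a) \<Rightarrow> 'a set \<Rightarrow> 'a \<Rightarrow> bool" where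
  "S_compact m S a \<longleftrightarrow> (\<exists>b s. compact_el b \<and> s \<in> S \<and> m s a \<le> b \<and> b \<le> a)"

definition S_noetherian :: "('a::complete_lattice \<Rightarrow> 'a \<Rightarrow> 'a) \<Rightarrow> 'a set \<Rightarrow> bool" where
  "S_noetherian m S \<longleftrightarrow> (\<forall>a. S_compact m S a)"

definition S_prime :: "('a::complete_lattice \<Rightarrow> 'a \<Rightarrow> 'a) \<Rightarrow> 'a set \<Rightarrow> 'a \<Rightarrow> bool" where
  "S_prime m S p \<longleftrightarrow> p \<noteq> top \<and> (\<forall>t\<in>S. \<not> t \<le> p) \<and>
     (\<exists>s\<in>S. \<forall>a b. m a b \<le> p \<longrightarrow> m s a \<le> p \<or> m s b \<le> p)"

end

theory Submission
  imports Defs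
begin


lemma ml_comm: "mult_lattice m \<Longrightarrow> m a b = m b a" unfolding mult_lattice_def by blast
lemma ml_assoc: "mult_lattice m \<Longrightarrow> m (m a b) c = m a (m b c)" unfolding mult_lattice_def by blast
lemma ml_dist: "mult_lattice m \<Longrightarrow> m a (Sup A) = Sup ((\<lambda>x. m a x) ` A)" unfolding mult_lattice_def by blast
lemma ml_unit: "mult_lattice m \<Longrightarrow> m top a = a" unfolding mult_lattice_def by blast
lemma ml_unit2: "mult_lattice m \<Longrightarrow> m a top = a" using ml_comm[of m a top] ml_unit[of m a] by simp

lemma ml_sup: "mult_lattice m \<Longrightarrow> m c (sup a b) = sup (m c a) (m c b)"
  using ml_dist[of m c "{a,b}"] by simp

lemma ml_bot: "mult_lattice m \<Longrightarrow> m c bot = bot"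
  using ml_dist[of m c "{}"] by simp

lemma ml_mono: "mult_lattice m \<Longrightarrow> a \<le> b \<Longrightarrow> m c a \<le> m c b"
proof -
  assume ml: "mult_lattice m" and ab: "a \<le> b"
  have "sup a b = b" using ab by (rule sup.absorb2)
  hence "m c b = sup (m c a) (m c b)" using ml_sup[OF ml, of c a b] by simp
  thus ?thesis by (metis sup.cobounded1)
qed

lemma ml_mono1: "mult_lattice m \<Longrightarrow> a \<le> b \<Longrightarrow> m a c \<le> m b c"
  by (simp add: ml_mono ml_comm[of m _ c])

lemma ml_le: "mult_lattice m \<Longrightarrow> m s a \<le> a"
  using ml_mono1[of m s top a] ml_unit[of m a] by simp

lemma ml_le2: "mult_lattice m \<Longrightarrow> m a s \<le> a"
  using ml_le[of m s a] ml_comm[of m a s] by simp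

lemma res_mul: "mult_lattice m \<Longrightarrow> m (residual m a e) e \<le> a"
proof -
  assume ml: "mult_lattice m"
  have "m (residual m a e) e = m e (residual m a e)" using ml_comm[OF ml, of "residual m a e" e] .
  also have "\<dots> = Sup ((\<lambda>x. m e x) ` {x. m x e \<le> a})" unfolding residual_def using ml_dist[OF ml, of e] by simp
  also have "\<dots> \<le> a" by (rule Sup_least) (auto simp: ml_comm[OF ml, of e])
  finally show ?thesis .
qed

lemma res_ge: "m x e \<le> a \<Longrightarrow> x \<le> residual m a e"
  unfolding residual_def by (auto intro: Sup_upper)

lemma res_mono: "a \<le> b \<Longrightarrow> residual m a e \<le> residual m b e"
  unfolding residual_def by (auto intro!: Sup_subset_mono)

lemma compact_sup: "compact_el c \<Longrightarrow> compact_el d \<Longrightarrow> compact_el (sup c d)"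
  unfolding compact_el_def
proof (intro allI impI)
  fix A assume c: "\<forall>A. c \<le> Sup A \<longrightarrow> (\<exists>F\<subseteq>A. finite F \<and> c \<le> Sup F)"
    and d: "\<forall>A. d \<le> Sup A \<longrightarrow> (\<exists>F\<subseteq>A. finite F \<and> d \<le> Sup F)"
    and h: "sup c d \<le> Sup A"
  have c1: "c \<le> Sup A" using h by simp
  have d1: "d \<le> Sup A" using h by simp
  obtain F1 where F1: "F1 \<subseteq> A" "finite F1" "c \<le> Sup F1" using c[rule_format, OF c1] by blast
  obtain F2 where F2: "F2 \<subseteq> A" "finite F2" "d \<le> Sup F2" using d[rule_format, OF d1] by blast
  have "sup c d \<le> Sup (F1 \<union> F2)" unfolding Sup_union_distrib using F1(3) F2(3) by (rule sup_mono)
  moreover have "F1 \<union> F2 \<subseteq> A" "finite (F1 \<union> F2)" using F1 F2 by auto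
  ultimately show "\<exists>F\<subseteq>A. finite F \<and> sup c d \<le> Sup F" by blast
qed

lemma compact_bot: "compact_el bot"
  unfolding compact_el_def by auto

lemma compact_Sup_fin: "finite F \<Longrightarrow> \<forall>x\<in>F. compact_el x \<Longrightarrow> compact_el (Sup F)"
proof (induction F rule: finite_induct)
  case empty then show ?case using compact_bot by simp
next
  case (insert x F)
  then have "compact_el x" "compact_el (Sup F)" by auto
  then show ?case unfolding Sup_insert by (rule compact_sup)
qed

lemma directed_bound:
  assumes "finite G" "G \<subseteq> D" "D \<noteq> {}" "\<forall>x\<in>D. \<forall>y\<in>D. \<exists>z\<in>D. x \<le> z \<and> y \<le> z"
  shows "\<exists>d\<in>D. \<forall>g\<in>G. g \<le> (d::'a::order)"
  using assms
proof (induction G rule: finite_induct)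
  case empty then show ?case by auto
next
  case (insert x F)
  then obtain d where "d \<in> D" "\<forall>g\<in>F. g \<le> d" by auto
  note dd = this
  have "x \<in> D" using insert.prems by auto
  then obtain z where z: "z \<in> D" "x \<le> z" "d \<le> z" using insert.prems(3) dd(1) by blast
  have "\<forall>g\<in>insert x F. g \<le> z" using z dd(2) order_trans by blast
  then show ?case using z(1) by blast
qed

lemma meet_cont:
  fixes x :: "'a::complete_lattice"
  assumes cg: "\<forall>a::'a::complete_lattice. \<exists>C. (\<forall>x\<in>C. compact_el x) \<and> a = Sup C"
    and D: "D \<noteq> {}" "\<forall>x\<in>D. \<forall>y\<in>D. \<exists>z\<in>D. x \<le> z \<and> y \<le> z"
  shows "inf x (Sup D) \<le> Sup ((\<lambda>d. inf x d) ` D)"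
proof -
  obtain C where C: "\<forall>x\<in>C. compact_el x" "inf x (Sup D) = Sup C" using cg by blast
  have "c \<le> Sup ((\<lambda>d. inf x d) ` D)" if "c \<in> C" for c
  proof -
    have cle: "c \<le> inf x (Sup D)" unfolding C(2) using that by (rule Sup_upper)
    have cD: "c \<le> Sup D" using cle by simp
    have cc: "compact_el c" using C(1) that by blast
    obtain G where G: "G \<subseteq> D" "finite G" "c \<le> Sup G"
      using cc[unfolded compact_el_def, rule_format, OF cD] by blast
    obtain d where d: "d \<in> D" "\<forall>g\<in>G. g \<le> d" using directed_bound[OF G(2) G(1) D] by blast
    have "c \<le> d" using G(3) d(2) by (meson Sup_least order_trans)
    hence "c \<le> inf x d" using cle by simp
    also have "\<dots> \<le> Sup ((\<lambda>d. inf x d) ` D)" using d(1) by (auto intro: Sup_upper)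
    finally show ?thesis .
  qed
  then show ?thesis using C(2) by (auto intro: Sup_least)
qed

lemma mp_inf: "mult_lattice m \<Longrightarrow> meet_principal m x \<Longrightarrow> inf a x = m x (residual m a x)"
proof -
  assume ml: "mult_lattice m" and mp: "meet_principal m x"
  have "inf a (m x top) = m x (inf (residual m a x) top)" using mp unfolding meet_principal_def by blast
  then show ?thesis using ml_unit2[OF ml, of x] by simp
qed

lemma jp_bot: "join_principal m x \<Longrightarrow> sup a (residual m bot x) = residual m (m a x) x"
proof -
  assume jp: "join_principal m x"
  have "sup a (residual m bot x) = residual m (sup (m a x) bot) x" using jp unfolding join_principal_def by blast
  then show ?thesis by simp
qed

lemma principal_mult_compact:
  fixes m :: "'a::complete_lattice \<Rightarrow> 'a \<Rightarrow> 'a"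
  assumes ml: "mult_lattice m"
    and cg: "\<forall>a::'a::complete_lattice. \<exists>C. (\<forall>x\<in>C. compact_el x) \<and> a = Sup C"
    and px: "principal_el m x" and cd: "compact_el d"
  shows "compact_el (m x d)"
  unfolding compact_el_def
proof (intro allI impI)
  fix A assume h: "m x d \<le> Sup A"
  define D where "D = {Sup F | F. F \<subseteq> A \<and> finite F}"
  have botD: "bot \<in> D" unfolding D_def by (auto intro!: exI[where x="{}"])
  have Dne: "D \<noteq> {}" using botD by auto
  have Ddir: "\<forall>u\<in>D. \<forall>v\<in>D. \<exists>z\<in>D. u \<le> z \<and> v \<le> z"
  proof (intro ballI)
    fix u v assume "u \<in> D" "v \<in> D"
    then obtain F1 F2 where "u = Sup F1" "v = Sup F2" "F1 \<subseteq> A" "F2 \<subseteq> A" "finite F1" "finite F2"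
      unfolding D_def by auto
    then show "\<exists>z\<in>D. u \<le> z \<and> v \<le> z" unfolding D_def
      by (intro bexI[of _ "Sup (F1 \<union> F2)"]) (auto simp: Sup_union_distrib intro!: exI[where x="F1 \<union> F2"])
  qed
  have SD: "Sup D = Sup A"
  proof (rule antisym)
    show "Sup D \<le> Sup A" unfolding D_def by (rule Sup_least) (auto intro: Sup_subset_mono)
    show "Sup A \<le> Sup D"
    proof (rule Sup_least)
      fix a assume "a \<in> A"
      hence "Sup {a} \<in> D" unfolding D_def by blast
      thus "a \<le> Sup D" using Sup_upper[of "Sup {a}" D] by simp
    qed
  qed
  define B where "B = Sup A"
  define q where "q = Sup ((\<lambda>b. residual m b x) ` D)"
  have mpx: "meet_principal m x" and jpx: "join_principal m x" using px principal_el_def by auto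
  have "m x q = Sup ((\<lambda>b. m x (residual m b x)) ` D)"
    unfolding q_def using ml_dist[OF ml] by (simp add: image_image)
  also have "\<dots> = Sup ((\<lambda>b. inf x b) ` D)" using mp_inf[OF ml mpx] by (simp add: inf_commute)
  also have "\<dots> = inf x B"
  proof (rule antisym)
    show "Sup ((\<lambda>b. inf x b) ` D) \<le> inf x B" unfolding B_def SD[symmetric]
      by (rule Sup_least) (auto intro: le_infI2 Sup_upper)
    show "inf x B \<le> Sup ((\<lambda>b. inf x b) ` D)" unfolding B_def SD[symmetric]
      using meet_cont[OF cg Dne Ddir] .
  qed
  also have "\<dots> = m x (residual m B x)" using mp_inf[OF ml mpx] by (simp add: inf_commute)
  finally have eq: "m x q = m x (residual m B x)" .
  have "sup q (residual m bot x) = residual m (m q x) x" using jp_bot[OF jpx] .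
  also have "\<dots> = residual m (m (residual m B x) x) x" using eq ml_comm[OF ml, of q x] ml_comm[OF ml, of "residual m B x" x] by simp
  also have "\<dots> = sup (residual m B x) (residual m bot x)" using jp_bot[OF jpx, of "residual m B x"] by simp
  finally have e2: "sup q (residual m bot x) = sup (residual m B x) (residual m bot x)" .
  have "residual m bot x \<le> q" unfolding q_def using botD by (auto intro: Sup_upper)
  hence "residual m B x \<le> q" using e2 by (metis sup.absorb1 sup.cobounded1)
  moreover have "d \<le> residual m B x" using h unfolding B_def by (intro res_ge) (simp add: ml_comm[OF ml, of d x])
  ultimately have "d \<le> q" by simp
  then obtain H where H: "H \<subseteq> (\<lambda>b. residual m b x) ` D" "finite H" "d \<le> Sup H"
    using cd unfolding compact_el_def q_def by blast
  then obtain D0 where D0: "D0 \<subseteq> D" "finite D0" "H = (\<lambda>b. residual m b x) ` D0"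
    by (meson finite_subset_image)
  obtain b0 where b0: "b0 \<in> D" "\<forall>g\<in>D0. g \<le> b0" using directed_bound[OF D0(2) D0(1) Dne Ddir] by blast
  have "Sup H \<le> residual m b0 x" using D0(3) b0(2) by (auto intro!: Sup_least res_mono)
  hence "d \<le> residual m b0 x" using H(3) by simp
  hence "m x d \<le> m x (residual m b0 x)" by (rule ml_mono[OF ml])
  also have "\<dots> \<le> b0" using res_mul[OF ml, of b0 x] ml_comm[OF ml, of x "residual m b0 x"] by simp
  finally have "m x d \<le> b0" .
  then show "\<exists>F\<subseteq>A. finite F \<and> m x d \<le> Sup F" using b0(1) unfolding D_def by blast
qed


theorem mainTheorem3:
  fixes m :: "'a::complete_lattice \<Rightarrow> 'a \<Rightarrow> 'a" and S :: "'a set"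
  assumes "r_lattice m" and "mult_closed m S" and "top \<in> S" and "bot \<notin> S"
  shows "S_noetherian m S \<longleftrightarrow> (\<forall>p. S_prime m S p \<longrightarrow> S_compact m S p)"
proof -
  have ml: "mult_lattice m" and modl: "\<forall>a b c::'a. a \<le> c \<longrightarrow> sup a (inf b c) = inf (sup a b) c"
    and pg: "\<forall>a::'a. \<exists>P. (\<forall>x\<in>P. principal_el m x) \<and> a = Sup P"
    and cg: "\<forall>a::'a. \<exists>C. (\<forall>x\<in>C. compact_el x) \<and> a = Sup C"
    using assms(1) unfolding r_lattice_def by auto
  have Sc: "\<forall>s\<in>S. compact_el s" "\<forall>s\<in>S. \<forall>t\<in>S. m s t \<in> S" using assms(2) unfolding mult_closed_def by auto
  show ?thesis
  proof
    assume "S_noetherian m S"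
    thus "\<forall>p. S_prime m S p \<longrightarrow> S_compact m S p" unfolding S_noetherian_def by blast
  next
    assume H: "\<forall>p. S_prime m S p \<longrightarrow> S_compact m S p"
    show "S_noetherian m S"
    proof (rule ccontr)
      assume "\<not> S_noetherian m S"
      then obtain a0 where a0: "\<not> S_compact m S a0" unfolding S_noetherian_def by blast
      define F where "F = {a. \<not> S_compact m S a}"
      define dn where "dn = (\<lambda>a::'a. {x. x \<le> a})"
      have chain_ub: "\<forall>C\<in>chains (dn ` F). \<exists>U\<in>dn ` F. \<forall>X\<in>C. X \<subseteq> U"
      proof
        fix C assume C: "C \<in> chains (dn ` F)"
        show "\<exists>U\<in>dn ` F. \<forall>X\<in>C. X \<subseteq> U"
        proof (cases "C = {}")
          case True then show ?thesis using a0 F_def by blast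
        next
          case False
          define C0 where "C0 = {a\<in>F. dn a \<in> C}"
          have CF: "C \<subseteq> dn ` F" using chainsD2[OF C] .
          have C0ne: "C0 \<noteq> {}" using False CF unfolding C0_def by blast
          have C0dir: "\<forall>x\<in>C0. \<forall>y\<in>C0. \<exists>z\<in>C0. x \<le> z \<and> y \<le> z"
          proof (intro ballI)
            fix x y assume xy: "x \<in> C0" "y \<in> C0"
            then have "dn x \<subseteq> dn y \<or> dn y \<subseteq> dn x" using chainsD[OF C] C0_def by auto
            then have "x \<le> y \<or> y \<le> x" unfolding dn_def by auto
            then show "\<exists>z\<in>C0. x \<le> z \<and> y \<le> z" using xy by auto
          qed
          have "\<not> S_compact m S (Sup C0)"
          proof
            assume "S_compact m S (Sup C0)"
            then obtain b s where b: "compact_el b" "s \<in> S" "m s (Sup C0) \<le> b" "b \<le> Sup C0"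
              unfolding S_compact_def by blast
            then obtain G where G: "G \<subseteq> C0" "finite G" "b \<le> Sup G" unfolding compact_el_def by blast
            obtain c where c: "c \<in> C0" "\<forall>g\<in>G. g \<le> c"
              using directed_bound[OF G(2) G(1) C0ne C0dir] by blast
            have "b \<le> c" using G(3) c(2) by (meson Sup_least order_trans)
            moreover have "m s c \<le> b" using b(3) ml_mono[OF ml, of c "Sup C0" s] c(1)
              by (meson Sup_upper order_trans)
            ultimately have "S_compact m S c" using b(1,2) unfolding S_compact_def by blast
            moreover have "c \<in> F" using c(1) C0_def by auto
            ultimately show False using F_def by auto
          qed
          hence "Sup C0 \<in> F" using F_def by auto
          moreover have "\<forall>X\<in>C. X \<subseteq> dn (Sup C0)"
          proof
            fix X assume X: "X \<in> C"
            then obtain a where a: "a \<in> F" "X = dn a" using CF by blast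
            hence "a \<in> C0" using X C0_def by auto
            thus "X \<subseteq> dn (Sup C0)" using a(2) unfolding dn_def by (auto intro: order_trans Sup_upper)
          qed
          ultimately show ?thesis by blast
        qed
      qed
      obtain M where M: "M \<in> dn ` F" "\<forall>X\<in>dn ` F. M \<subseteq> X \<longrightarrow> X = M"
        using Zorn_Lemma2[OF chain_ub] by blast
      then obtain p where pF: "p \<in> F" and Mp: "M = dn p" by blast
      have pmax: "S_compact m S y" if py: "p \<le> y" and yp: "y \<noteq> p" for y
      proof (rule ccontr)
        assume "\<not> S_compact m S y"
        hence "dn y \<in> dn ` F" using F_def by auto
        moreover have "M \<subseteq> dn y" using Mp py unfolding dn_def by auto
        ultimately have "dn y = dn p" using M Mp by blast
        hence "y \<le> p" unfolding dn_def by auto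
        thus False using py yp by auto
      qed
      have pnc: "\<not> S_compact m S p" using pF F_def by auto
      have "S_prime m S p"
      proof -
        have notS: "\<forall>t\<in>S. \<not> t \<le> p"
        proof (intro ballI notI)
          fix t assume t: "t \<in> S" "t \<le> p"
          have "m t p \<le> t" using ml_le2[OF ml] .
          hence "S_compact m S p" unfolding S_compact_def using t Sc(1) by blast
          thus False using pnc by simp
        qed
        hence ptop: "p \<noteq> top" using assms(3) by auto
        have prime: "\<forall>a b. m a b \<le> p \<longrightarrow> m top a \<le> p \<or> m top b \<le> p"
        proof (intro allI impI)
          fix a b assume ab: "m a b \<le> p"
          show "m top a \<le> p \<or> m top b \<le> p"
          proof (rule ccontr)
            assume "\<not> ?thesis"
            hence na: "\<not> a \<le> p" and nb: "\<not> b \<le> p" using ml_unit[OF ml] by auto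
            obtain P where P: "\<forall>x\<in>P. principal_el m x" "a = Sup P" using pg by blast
            obtain x where x: "x \<in> P" "\<not> x \<le> p" using P(2) na by (metis Sup_least)
            have xa: "x \<le> a" using x(1) P(2) by (simp add: Sup_upper)
            have px: "principal_el m x" using P x by blast
            have mpx: "meet_principal m x" using px principal_el_def by blast
            have xb: "m x b \<le> p" using ab ml_mono1[OF ml xa] order_trans by blast
            have "sup p x \<noteq> p" using x(2) by (metis sup.cobounded2)
            hence "S_compact m S (sup p x)" using pmax by simp
            then obtain c s1 where c: "compact_el c" "s1 \<in> S" "m s1 (sup p x) \<le> c" "c \<le> sup p x"
              unfolding S_compact_def by blast
            define r where "r = residual m p x"
            have pr: "p \<le> r" unfolding r_def by (rule res_ge) (rule ml_le2[OF ml])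
            have br: "b \<le> r" unfolding r_def using xb ml_comm[OF ml, of x b] by (intro res_ge) simp
            have "r \<noteq> p" using br nb by auto
            hence "S_compact m S r" using pmax pr by blast
            then obtain d s2 where d: "compact_el d" "s2 \<in> S" "m s2 r \<le> d" "d \<le> r"
              unfolding S_compact_def by blast
            obtain K where K: "\<forall>k\<in>K. compact_el k" "p = Sup K" using cg by blast
            have "c \<le> Sup (insert x K)" using c(4) K(2) by (simp add: sup_commute)
            then obtain G where G: "G \<subseteq> insert x K" "finite G" "c \<le> Sup G"
              using c(1) unfolding compact_el_def by blast
            define p' where "p' = Sup (G - {x})"
            have p'c: "compact_el p'" unfolding p'_def using G K(1) by (intro compact_Sup_fin) auto
            have p'p: "p' \<le> p" unfolding p'_def K(2) using G(1) by (auto intro!: Sup_subset_mono)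
            have "Sup G \<le> sup p' x" unfolding p'_def
              by (rule Sup_least) (metis Diff_iff Sup_upper le_supI1 singletonD sup.cobounded2)
            hence cle: "c \<le> sup p' x" using G(3) by simp
            have "m s1 p \<le> m s1 (sup p x)" using ml_mono[OF ml, of p "sup p x" s1] by simp
            hence "m s1 p \<le> c" using c(3) by simp
            hence "m s1 p \<le> inf (sup p' x) p" using cle ml_le[OF ml] by auto
            also have "\<dots> = sup p' (inf x p)" using modl[rule_format, OF p'p, of x] by simp
            also have "inf x p = m x r" unfolding r_def using mp_inf[OF ml mpx] by (metis inf_commute)
            finally have s1p: "m s1 p \<le> sup p' (m x r)" .
            have "m s2 (m s1 p) \<le> m s2 (sup p' (m x r))" using ml_mono[OF ml s1p] .
            also have "\<dots> = sup (m s2 p') (m s2 (m x r))" using ml_sup[OF ml] .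
            also have "m s2 (m x r) = m x (m s2 r)" using ml_assoc[OF ml, of s2 x r] ml_assoc[OF ml, of x s2 r] ml_comm[OF ml, of s2 x] by simp
            also have "sup (m s2 p') (m x (m s2 r)) \<le> sup p' (m x d)"
              using ml_le[OF ml] ml_mono[OF ml d(3)] by (meson sup_mono)
            finally have key: "m (m s2 s1) p \<le> sup p' (m x d)" using ml_assoc[OF ml, of s2 s1 p] by simp
            have "m x d \<le> m x r" using ml_mono[OF ml d(4)] .
            also have "m x r \<le> p" using res_mul[OF ml, of p x] ml_comm[OF ml, of x "residual m p x"] unfolding r_def by simp
            finally have e_le: "sup p' (m x d) \<le> p" using p'p by simp
            have e_c: "compact_el (sup p' (m x d))"
              using compact_sup p'c principal_mult_compact[OF ml cg px d(1)] by blast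
            have "m s2 s1 \<in> S" using Sc(2) c(2) d(2) by blast
            hence "S_compact m S p" unfolding S_compact_def using key e_le e_c by blast
            thus False using pnc by simp
          qed
        qed
        show ?thesis unfolding S_prime_def using ptop notS prime assms(3) by blast
      qed
      thus False using H pnc by blast
    qed
  qed
qed

end
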